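(* Consider the closed-loop system described in the context, with the controller matrices $a,b,c$ regarded as independent variables, and suppose $\mathcal{A}$ is Hurwitz. Then the Fréchet derivatives of the cost $E$ with respect to $a$, $b$, $c$ are $$\partial_a E=2H_{22},\qquad \partial_b E=2\big(H_{21}\mathbf{C}^{T}+Q_{2\bullet}\mathcal{B}\mathbf{D}^{T}\big),\qquad \partial_c E=2\big(B_2^{T}H_{12}+D_0^{T}\mathcal{C}P_{\bullet 2}\big).$$
   Context: Let $n,m_1,m_2,p,p_0$ be positive integers. Plant matrices: $A\in\mathbb{R}^{n\times n}$, $B_1\in\mathbb{R}^{n\times m_1}$, $B_2\in\mathbb{R}^{n\times m_2}$, $C\in\mathbb{R}^{p\times n}$, $D\in\mathbb{R}^{p\times m_1}$, $C_0\in\mathbb{R}^{p_0\times n}$, $D_0\in\mathbb{R}^{p_0\times m_2}$. Controller matrices: $a\in\mathbb{R}^{n\times n}$, $b_1\in\mathbb{R}^{n\times m_2}$, $b_2\in\mathbb{R}^{n\times p}$, $c\in\mathbb{R}^{m_2\times n}$. Set $b:=[\,b_1\ \ b_2\,]\in\mathbb{R}^{n\times(m_2+p)}$, $B:=[\,B_1\ \ B_2\,]$, $\mathbf{C}:=\begin{bmatrix}0\\ C\end{bmatrix}\in\mathbb{R}^{(m_2+p)\times n}$, $\mathbf{D}:=\begin{bmatrix}0 & I_{m_2}\\ D & 0\end{bmatrix}\in\mathbb{R}^{(m_2+p)\times(m_1+m_2)}$. The closed-loop matrices are $$\mathcal{A}:=\begin{bmatrix}A & B_2c\\ b\mathbf{C}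 & a\end{bmatrix}\in\mathbb{R}^{2n\times 2n},\quad \mathcal{B}:=\begin{bmatrix}B\\ b\mathbf{D}\end{bmatrix},\quad \mathcal{C}:=\begin{bmatrix}C_0 & D_0c\end{bmatrix}.$$ When $\mathcal{A}$ is Hurwitz, $P,Q\in\mathbb{R}^{2n\times 2n}$ are the unique solutions of $\mathcal{A}P+P\mathcal{A}^{T}+\mathcal{B}\mathcal{B}^{T}=0$ and $\mathcal{A}^{T}Q+Q\mathcal{A}+\mathcal{C}^{T}\mathcal{C}=0$, the cost is $E:=\mathrm{Tr}(\mathcal{C}P\mathcal{C}^{T})$, and $H:=QP$. The matrices $H,P,Q$ are partitioned into $n\times n$ blocks indexed $(j,k)$, $j,k\in\{1,2\}$ (e.g. $H_{12},H_{21},H_{22}$); $Q_{2\bullet}\in\mathbb{R}^{n\times 2n}$ is the second block row of $Q$ and $P_{\bullet2}\in\mathbb{R}^{2n\times n}$ the second block column of $P$. Derivatives are with respect to the Frobenius inner product. *)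

theory Defs
  imports "HOL-Analysis.Analysis"
begin

(* Matrices are HOL-Analysis matrices: M :: real^'c^'r is an 'r-by-'c matrix, entry M$i$j.
   Block matrices are indexed by sum types. *)

definition hcat :: "real^('c1::finite)^('r::finite) \<Rightarrow> real^('c2::finite)^('r::finite) \<Rightarrow> real^(('c1::finite)+('c2::finite))^('r::finite)" where
  "hcat X Y = (\<chi> i j. case j of Inl j1 \<Rightarrow> X$i$j1 | Inr j2 \<Rightarrow> Y$i$j2)"

definition vcat :: "real^('c::finite)^('r1::finite) \<Rightarrow> real^('c::finite)^('r2::finite) \<Rightarrow> real^('c::finite)^(('r1::finite)+('r2::finite))" where
  "vcat X Y = (\<chi> i j. case i of Inl i1 \<Rightarrow> X$i1$j | Inr i2 \<Rightarrow> Y$i2$j)"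

definition block ::
  "real^('c1::finite)^('r1::finite) \<Rightarrow> real^('c2::finite)^('r1::finite) \<Rightarrow> real^('c1::finite)^('r2::finite) \<Rightarrow> real^('c2::finite)^('r2::finite) \<Rightarrow> real^(('c1::finite)+('c2::finite))^(('r1::finite)+('r2::finite))" where
  "block M11 M12 M21 M22 = vcat (hcat M11 M12) (hcat M21 M22)"

definition blk11 :: "real^(('n::finite)+('n::finite))^(('n::finite)+('n::finite)) \<Rightarrow> real^('n::finite)^('n::finite)" where
  "blk11 M = (\<chi> i j. M$(Inl i)$(Inl j))"
definition blk12 :: "real^(('n::finite)+('n::finite))^(('n::finite)+('n::finite)) \<Rightarrow> real^('n::finite)^('n::finite)" where
  "blk12 M = (\<chi> i j. M$(Inl i)$(Inr j))"
definition blk21 :: "real^(('n::finite)+('n::finite))^(('n::finite)+('n::finite)) \<Rightarrow> real^('n::finite)^('n::finite)" where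
  "blk21 M = (\<chi> i j. M$(Inr i)$(Inl j))"
definition blk22 :: "real^(('n::finite)+('n::finite))^(('n::finite)+('n::finite)) \<Rightarrow> real^('n::finite)^('n::finite)" where
  "blk22 M = (\<chi> i j. M$(Inr i)$(Inr j))"

definition brow2 :: "real^(('n::finite)+('n::finite))^(('n::finite)+('n::finite)) \<Rightarrow> real^(('n::finite)+('n::finite))^('n::finite)" where
  "brow2 M = (\<chi> i j. M$(Inr i)$j)"
definition bcol2 :: "real^(('n::finite)+('n::finite))^(('n::finite)+('n::finite)) \<Rightarrow> real^('n::finite)^(('n::finite)+('n::finite))" where
  "bcol2 M = (\<chi> i j. M$i$(Inr j))"

definition hurwitz :: "real^('k::finite)^('k::finite) \<Rightarrow> bool" where
  "hurwitz M \<longleftrightarrow>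
     (\<forall>z::complex. det (mat z - (\<chi> i j. complex_of_real (M$i$j))) = 0 \<longrightarrow> Re z < 0)"

(* the (unique, when M is Hurwitz) solution X of  M X + X M^T + W = 0 *)
definition lyap :: "real^('k::finite)^('k::finite) \<Rightarrow> real^('k::finite)^('k::finite) \<Rightarrow> real^('k::finite)^('k::finite)" where
  "lyap M W = (THE X. M ** X + X ** transpose M + W = 0)"

definition bfC :: "real^('n::finite)^('p::finite) \<Rightarrow> real^('n::finite)^(('m2::finite)+('p::finite))" where
  "bfC C = vcat 0 C"
definition bfD :: "real^('m1::finite)^('p::finite) \<Rightarrow> real^(('m1::finite)+('m2::finite))^(('m2::finite)+('p::finite))" where
  "bfD D = block 0 (mat 1) D 0"

(* closed-loop matrices; b = [b1 b2] is a single variable *)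
definition clA :: "real^('n::finite)^('n::finite) \<Rightarrow> real^('m2::finite)^('n::finite) \<Rightarrow> real^('n::finite)^('p::finite)
      \<Rightarrow> real^('n::finite)^('n::finite) \<Rightarrow> real^(('m2::finite)+('p::finite))^('n::finite) \<Rightarrow> real^('n::finite)^('m2::finite) \<Rightarrow> real^(('n::finite)+('n::finite))^(('n::finite)+('n::finite))" where
  "clA A B2 C a b c = block A (B2 ** c) (b ** bfC C) a"

definition clB :: "real^('m1::finite)^('n::finite) \<Rightarrow> real^('m2::finite)^('n::finite) \<Rightarrow> real^('m1::finite)^('p::finite)
      \<Rightarrow> real^(('m2::finite)+('p::finite))^('n::finite) \<Rightarrow> real^(('m1::finite)+('m2::finite))^(('n::finite)+('n::finite))" where
  "clB B1 B2 D b = vcat (hcat B1 B2) (b ** bfD D)"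

definition clC :: "real^('n::finite)^('p0::finite) \<Rightarrow> real^('m2::finite)^('p0::finite) \<Rightarrow> real^('n::finite)^('m2::finite) \<Rightarrow> real^(('n::finite)+('n::finite))^('p0::finite)" where
  "clC C0 D0 c = hcat C0 (D0 ** c)"

definition gramP where
  "gramP A B1 B2 C D a b c =
     lyap (clA A B2 C a b c) (clB B1 B2 D b ** transpose (clB B1 B2 D b))"

definition gramQ where
  "gramQ A B2 C C0 D0 a b c =
     lyap (transpose (clA A B2 C a b c)) (transpose (clC C0 D0 c) ** clC C0 D0 c)"

definition cost where
  "cost A B1 B2 C D C0 D0 a b c =
     trace (clC C0 D0 c ** gramP A B1 B2 C D a b c ** transpose (clC C0 D0 c))"

definition Hmat where
  "Hmat A B1 B2 C D C0 D0 a b c = gramQ A B2 C C0 D0 a b c ** gramP A B1 B2 C D a b c"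

end

theory Submission
  imports Defs "Jordan_Normal_Form.Schur_Decomposition"
begin


lemma sum_single_nat:
  fixes f :: "nat \<Rightarrow> 'a::comm_monoid_add"
  assumes "i < n" "\<And>k. k < n \<Longrightarrow> k \<noteq> i \<Longrightarrow> f k = 0"
  shows "(\<Sum>k\<in>{0..<n}. f k) = f i"
  using assms by (subst sum.remove[of _ i]) (auto intro!: sum.neutral)

lemma tri_lyap:
  fixes T Y :: "complex mat"
  assumes T: "T \<in> carrier_mat n n" "upper_triangular T" and Y: "Y \<in> carrier_mat n n"
  and d: "\<And>i. i<n \<Longrightarrow> Re (T $$ (i,i)) < 0"
  and eq: "T * Y + Y * transpose_mat T = 0\<^sub>m n n"
  shows "Y = 0\<^sub>m n n"
proof -
  have main: "\<And>i j. i < n \<Longrightarrow> j < n \<Longrightarrow> Y $$ (i,j) = 0"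
  proof -
    fix i j
    show "i < n \<Longrightarrow> j < n \<Longrightarrow> Y $$ (i,j) = 0"
    proof (induction "2*n - i - j" arbitrary: i j rule: less_induct)
      case less
      have ut: "\<And>a b. a < n \<Longrightarrow> b < a \<Longrightarrow> T $$ (a,b) = 0"
        using T unfolding upper_triangular_def by auto
      have e: "(T * Y + Y * transpose_mat T) $$ (i,j) = 0"
        using eq less.prems by simp
      have s1: "(\<Sum>k\<in>{0..<n}. T $$ (i,k) * Y $$ (k,j)) = T $$ (i,i) * Y $$ (i,j)"
      proof (rule sum_single_nat[OF less.prems(1)])
        fix k assume k: "k < n" "k \<noteq> i"
        show "T $$ (i,k) * Y $$ (k,j) = 0"
        proof (cases "k < i")
          case True thus ?thesis using ut less.prems k by simp
        next
          case False
          hence "Y $$ (k,j) = 0" using less.hyps[of k j] less.prems k by simp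
          thus ?thesis by simp
        qed
      qed
      have s2: "(\<Sum>k\<in>{0..<n}. Y $$ (i,k) * T $$ (j,k)) = Y $$ (i,j) * T $$ (j,j)"
      proof (rule sum_single_nat[OF less.prems(2)])
        fix k assume k: "k < n" "k \<noteq> j"
        show "Y $$ (i,k) * T $$ (j,k) = 0"
        proof (cases "k < j")
          case True thus ?thesis using ut less.prems k by simp
        next
          case False
          hence "Y $$ (i,k) = 0" using less.hyps[of i k] less.prems k by simp
          thus ?thesis by simp
        qed
      qed
      have "(T * Y + Y * transpose_mat T) $$ (i,j) = 
           (\<Sum>k\<in>{0..<n}. T $$ (i,k) * Y $$ (k,j)) + (\<Sum>k\<in>{0..<n}. Y $$ (i,k) * T $$ (j,k))"
        using T Y less.prems by (simp add: scalar_prod_def)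
      hence "(T $$ (i,i) + T $$ (j,j)) * Y $$ (i,j) = 0" using e s1 s2 by (simp add: algebra_simps)
      moreover have "T $$ (i,i) + T $$ (j,j) \<noteq> 0"
      proof
        assume "T $$ (i,i) + T $$ (j,j) = 0"
        hence "Re (T $$ (i,i)) + Re (T $$ (j,j)) = 0" by (metis plus_complex.sel(1) zero_complex.sel(1))
        thus False using d[OF less.prems(1)] d[OF less.prems(2)] by simp
      qed
      ultimately show ?case by simp
    qed
  qed
  show ?thesis using Y main by (intro eq_matI) auto
qed

lemma poly_prod_list_root:
  fixes es :: "complex list"
  assumes "e \<in> set es" shows "poly (\<Prod>a\<leftarrow>es. [:- a, 1:]) e = 0"
  using assms by (induction es) (auto simp: poly_prod_list)

lemma jnf_lyap:
  fixes A X :: "complex mat"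
  assumes A: "A \<in> carrier_mat n n" and ev: "\<And>e. eigenvalue A e \<Longrightarrow> Re e < 0"
  and X: "X \<in> carrier_mat n n" and eq: "A * X + X * transpose_mat A = 0\<^sub>m n n"
  shows "X = 0\<^sub>m n n"
proof -
  obtain es where cp: "char_poly A = (\<Prod>a\<leftarrow>es. [:- a, 1:])"
    using char_poly_factorized[OF A] by blast
  obtain B P Q where sd: "schur_decomposition A es = (B,P,Q)" by (cases "schur_decomposition A es") auto
  from schur_decomposition[OF A cp sd] have sw: "similar_mat_wit A B P Q"
    and ut: "upper_triangular B" and dg: "diag_mat B = es" by auto
  have dimA: "dim_row A = n" using A by auto
  from sw have B: "B \<in> carrier_mat n n" and P: "P \<in> carrier_mat n n" and Q: "Q \<in> carrier_mat n n"
    and PQ: "P * Q = 1\<^sub>m n" and QP: "Q * P = 1\<^sub>m n" and APBQ: "A = P * B * Q"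
    unfolding similar_mat_wit_def Let_def dimA by auto
  have diag: "Re (B $$ (i,i)) < 0" if i: "i < n" for i
  proof -
    have "B $$ (i,i) \<in> set es" using dg i B unfolding diag_mat_def by auto
    hence "poly (char_poly A) (B $$ (i,i)) = 0" unfolding cp by (rule poly_prod_list_root)
    hence "eigenvalue A (B $$ (i,i))" using eigenvalue_root_char_poly[OF A] by simp
    thus ?thesis by (rule ev)
  qed
  have BQAP: "B = Q * A * P"
  proof -
    have "Q * A * P = Q * (P * B * Q) * P" using APBQ by simp
    also have "\<dots> = (Q * P) * B * (Q * P)" using B P Q by (simp add: assoc_mult_mat[of _ n n _ n _ n])
    also have "\<dots> = B" using QP B by simp
    finally show ?thesis by simp
  qed
  define Y where "Y = Q * X * transpose_mat Q"
  have Yc: "Y \<in> carrier_mat n n" using Q X unfolding Y_def by auto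
  have PQT: "transpose_mat Q * transpose_mat P = 1\<^sub>m n"
    using transpose_mult[OF P Q] PQ by simp
  have "B * Y + Y * transpose_mat B = Q * (A * X + X * transpose_mat A) * transpose_mat Q"
  proof -
    have "B * Y = Q * A * (P * Q) * X * transpose_mat Q"
      unfolding BQAP Y_def using A P Q X by (simp add: assoc_mult_mat[of _ n n _ n _ n])
    also have "\<dots> = Q * A * X * transpose_mat Q" using PQ A Q X by simp
    finally have 1: "B * Y = Q * A * X * transpose_mat Q" .
    have BT: "transpose_mat B = transpose_mat P * transpose_mat A * transpose_mat Q"
      unfolding BQAP using A P Q by (simp add: transpose_mult[of _ n n _ n] assoc_mult_mat[of _ n n _ n _ n])
    have "Y * transpose_mat B = Q * X * (transpose_mat Q * transpose_mat P) * transpose_mat A * transpose_mat Q"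
      unfolding BT Y_def using A P Q X by (simp add: assoc_mult_mat[of _ n n _ n _ n])
    also have "\<dots> = Q * X * transpose_mat A * transpose_mat Q" using PQT A Q X by simp
    finally have 2: "Y * transpose_mat B = Q * X * transpose_mat A * transpose_mat Q" .
    have "Q * (A * X + X * transpose_mat A) * transpose_mat Q
        = Q * ((A * X) * transpose_mat Q + (X * transpose_mat A) * transpose_mat Q)"
      using A Q X by (simp add: assoc_mult_mat[of _ n n _ n _ n] add_mult_distrib_mat[of _ n n])
    also have "\<dots> = Q * ((A * X) * transpose_mat Q) + Q * ((X * transpose_mat A) * transpose_mat Q)"
      using A Q X by (simp add: mult_add_distrib_mat[of _ n n _ n])
    finally show ?thesis unfolding 1 2 using A Q X
      by (simp add: assoc_mult_mat[of _ n n _ n _ n])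
  qed
  also have "\<dots> = 0\<^sub>m n n" unfolding eq using Q by simp
  finally have "Y = 0\<^sub>m n n" using tri_lyap[OF B ut Yc diag] by blast
  hence "P * Y * transpose_mat P = 0\<^sub>m n n" using P by simp
  moreover have "P * Y * transpose_mat P = X"
  proof -
    have "P * Y * transpose_mat P = (P * Q) * X * (transpose_mat Q * transpose_mat P)"
      unfolding Y_def using P Q X by (simp add: assoc_mult_mat[of _ n n _ n _ n])
    thus ?thesis using PQ PQT X by simp
  qed
  ultimately show ?thesis by simp
qed
no_notation Matrix.vec_index (infixl "$" 100)
no_notation Matrix.scalar_prod (infix "\<bullet>" 70)

lemma sum_reindex_bij:
  assumes f: "bij_betw f {0..<n} (UNIV::'k::finite set)"
  shows "(\<Sum>k\<in>{0..<n}. h (f k)) = (\<Sum>y\<in>UNIV. h y)"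
  using sum.reindex_bij_betw[OF f, of h] by simp

lemma lyap_inj_hurwitz:
  fixes M X :: "real^'k::finite^'k"
  assumes hw: "hurwitz M" and eq: "M ** X + X ** transpose M = 0"
  shows "X = 0"
proof -
  define n where "n = CARD('k)"
  obtain f where f: "bij_betw f {0..<n} (UNIV::'k set)"
    using ex_bij_betw_nat_finite[of "UNIV::'k set"] unfolding n_def by auto
  define g where "g = inv_into {0..<n} f"
  have fg: "f (g y) = y" for y using f unfolding g_def by (meson UNIV_I bij_betw_inv_into_right)
  have gl: "g y < n" for y using f unfolding g_def
    by (metis UNIV_I atLeastLessThan_iff bij_betw_imp_surj_on inv_into_into)
  have gf: "i < n \<Longrightarrow> g (f i) = i" for i using f unfolding g_def
    by (simp add: bij_betw_inv_into_left)
  define MJ where "MJ = mat n n (\<lambda>(i,j). complex_of_real (M $ f i $ f j))"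
  define XJ where "XJ = mat n n (\<lambda>(i,j). complex_of_real (X $ f i $ f j))"
  have MJc: "MJ \<in> carrier_mat n n" and XJc: "XJ \<in> carrier_mat n n" unfolding MJ_def XJ_def by auto
  have eqJ: "MJ * XJ + XJ * transpose_mat MJ = 0\<^sub>m n n"
  proof (rule eq_matI)
    fix i j assume ij: "i < dim_row (0\<^sub>m n n :: complex mat)" "j < dim_col (0\<^sub>m n n :: complex mat)"
    hence i: "i < n" and j: "j < n" by auto
    have "(MJ * XJ + XJ * transpose_mat MJ) $$ (i,j)
        = (\<Sum>k\<in>{0..<n}. complex_of_real (M $ f i $ f k * X $ f k $ f j))
        + (\<Sum>k\<in>{0..<n}. complex_of_real (X $ f i $ f k * M $ f j $ f k))"
      using i j unfolding MJ_def XJ_def by (simp add: scalar_prod_def)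
    also have "\<dots> = complex_of_real ((M ** X + X ** transpose M) $ f i $ f j)"
      using sum_reindex_bij[OF f, of "\<lambda>k. complex_of_real (M $ f i $ k) * complex_of_real (X $ k $ f j)"]
        sum_reindex_bij[OF f, of "\<lambda>k. complex_of_real (X $ f i $ k) * complex_of_real (M $ f j $ k)"]
      by (simp add: matrix_matrix_mult_def transpose_def)
    also have "\<dots> = 0" using eq by simp
    finally show "(MJ * XJ + XJ * transpose_mat MJ) $$ (i,j) = 0\<^sub>m n n $$ (i,j)" using i j by simp
  qed (use MJc XJc in auto)
  have ev: "Re e < 0" if ee: "eigenvalue MJ e" for e
  proof -
    obtain v where v: "v \<in> carrier_vec n" "v \<noteq> 0\<^sub>v n" and Mv: "MJ *\<^sub>v v = e \<cdot>\<^sub>v v"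
      using ee MJc unfolding eigenvalue_def eigenvector_def by auto
    define w :: "complex^'k" where "w = (\<chi> y. vec_index v (g y))"
    define Mc :: "complex^'k^'k" where "Mc = (\<chi> i j. complex_of_real (M$i$j))"
    have Mw: "Mc *v w = e *s w"
    proof -
      have "(Mc *v w) $ y = (e *s w) $ y" for y
      proof -
        have "(Mc *v w) $ y = (\<Sum>z\<in>UNIV. complex_of_real (M $ f (g y) $ z) * vec_index v (g z))"
          unfolding Mc_def w_def by (simp add: matrix_vector_mult_def fg)
        also have "\<dots> = (\<Sum>k\<in>{0..<n}. complex_of_real (M $ f (g y) $ f k) * vec_index v k)"
          using sum_reindex_bij[OF f, of "\<lambda>z. complex_of_real (M $ f (g y) $ z) * vec_index v (g z)"]
          by (simp add: gf)
        also have "\<dots> = vec_index (MJ *\<^sub>v v) (g y)"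
          using gl v unfolding MJ_def by (simp add: scalar_prod_def)
        also have "\<dots> = e * vec_index v (g y)" using Mv gl v by simp
        finally show ?thesis unfolding w_def by simp
      qed
      thus ?thesis unfolding Finite_Cartesian_Product.vec_eq_iff by simp
    qed
    have w0: "w \<noteq> 0"
    proof
      assume w0: "w = 0"
      have "v = 0\<^sub>v n"
      proof (rule eq_vecI)
        fix i assume "i < dim_vec (0\<^sub>v n :: complex vec)"
        hence i: "i < n" by simp
        have "vec_index v i = w $ f i" unfolding w_def using gf[OF i] by simp
        thus "vec_index v i = vec_index (0\<^sub>v n) i" using w0 i by simp
      qed (use v in auto)
      thus False using v by simp
    qed
    have "Determinants.det (Finite_Cartesian_Product.mat e - Mc) = 0"
    proof (rule ccontr)
      assume "Determinants.det (Finite_Cartesian_Product.mat e - Mc) \<noteq> 0"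
      then obtain N where N: "N ** (Finite_Cartesian_Product.mat e - Mc) = Finite_Cartesian_Product.mat 1"
        unfolding invertible_det_nz[symmetric] invertible_def by blast
      have me: "Finite_Cartesian_Product.mat e *v w = e *s w"
        by (simp add: Finite_Cartesian_Product.vec_eq_iff matrix_vector_mult_def Finite_Cartesian_Product.mat_def if_distrib[of "\<lambda>x. x * _"] cong: if_cong)
      have "(Finite_Cartesian_Product.mat e - Mc) *v w = 0"
        using Mw me by (simp add: matrix_vector_mult_diff_rdistrib Finite_Cartesian_Product.vec_eq_iff)
      hence "N *v ((Finite_Cartesian_Product.mat e - Mc) *v w) = 0" by simp
      hence "w = 0" unfolding matrix_vector_mul_assoc N by simp
      thus False using w0 by simp
    qed
    thus ?thesis using hw unfolding hurwitz_def Mc_def by blast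
  qed
  have "XJ = 0\<^sub>m n n" by (rule jnf_lyap[OF MJc ev XJc eqJ])
  hence "X $ y $ z = 0" for y z
  proof -
    assume "XJ = 0\<^sub>m n n"
    hence "XJ $$ (g y, g z) = 0" using gl by simp
    thus ?thesis unfolding XJ_def using gl by (simp add: fg)
  qed
  thus ?thesis by (simp add: Finite_Cartesian_Product.vec_eq_iff)
qed

lemma mm_scaleR_right: "(A::real^'m^'n) ** (c *\<^sub>R B) = c *\<^sub>R (A ** (B::real^'p^'m))"
  by (simp add: Finite_Cartesian_Product.vec_eq_iff matrix_matrix_mult_def sum_distrib_left mult.left_commute)
lemma mm_scaleR_left: "(c *\<^sub>R (A::real^'m^'n)) ** B = c *\<^sub>R (A ** (B::real^'p^'m))"
  by (simp add: Finite_Cartesian_Product.vec_eq_iff matrix_matrix_mult_def sum_distrib_left mult.assoc)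
lemma mm_add_right: "(A::real^'m^'n) ** (B + C) = A ** B + A ** (C::real^'p^'m)"
  by (simp add: Finite_Cartesian_Product.vec_eq_iff matrix_matrix_mult_def sum.distrib distrib_left)
lemma mm_add_left: "((A::real^'m^'n) + B) ** C = A ** C + B ** (C::real^'p^'m)"
  by (simp add: Finite_Cartesian_Product.vec_eq_iff matrix_matrix_mult_def sum.distrib distrib_right)
lemma mm_diff_right: "(A::real^'m^'n) ** (B - C) = A ** B - A ** (C::real^'p^'m)"
  by (simp add: Finite_Cartesian_Product.vec_eq_iff matrix_matrix_mult_def sum_subtractf right_diff_distrib)
lemma mm_diff_left: "((A::real^'m^'n) - B) ** C = A ** C - B ** (C::real^'p^'m)"
  by (simp add: Finite_Cartesian_Product.vec_eq_iff matrix_matrix_mult_def sum_subtractf left_diff_distrib)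
lemma mm_zero_right[simp]: "(A::real^'m^'n) ** (0::real^'p^'m) = 0"
  by (simp add: Finite_Cartesian_Product.vec_eq_iff matrix_matrix_mult_def)
lemma mm_zero_left[simp]: "(0::real^'m^'n) ** (A::real^'p^'m) = 0"
  by (simp add: Finite_Cartesian_Product.vec_eq_iff matrix_matrix_mult_def)

lemma bilinear_mm: "bilinear (\<lambda>(A::real^'m^'n) (B::real^'p^'m). A ** B)"
  unfolding bilinear_def
  by (auto intro!: linearI simp: mm_scaleR_right mm_scaleR_left mm_add_right mm_add_left)

lemma bb_mm: "bounded_bilinear (\<lambda>(A::real^'m^'n) (B::real^'p^'m). A ** B)"
  using bilinear_mm bilinear_conv_bounded_bilinear by blast

lemma transpose_add: "transpose ((A::real^'m^'n) + B) = transpose A + transpose B"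
  by (simp add: Finite_Cartesian_Product.vec_eq_iff transpose_def)
lemma transpose_diff: "transpose ((A::real^'m^'n) - B) = transpose A - transpose B"
  by (simp add: Finite_Cartesian_Product.vec_eq_iff transpose_def)
lemma transpose_zero[simp]: "transpose (0::real^'m^'n) = 0"
  by (simp add: Finite_Cartesian_Product.vec_eq_iff transpose_def)

lemma bl_transpose: "bounded_linear (transpose :: real^'m^'n \<Rightarrow> real^'n^'m)"
proof -
  have "linear (transpose :: real^'m^'n \<Rightarrow> real^'n^'m)"
    by (auto intro!: linearI simp: transpose_add transpose_scalar)
  thus ?thesis using linear_conv_bounded_linear by blast
qed

lemma bl_trace: "bounded_linear (trace :: real^'n^'n \<Rightarrow> real)"
proof -
  have "linear (trace :: real^'n^'n \<Rightarrow> real)"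
    by (auto intro!: linearI simp: trace_add trace_def sum_distrib_left)
  thus ?thesis using linear_conv_bounded_linear by blast
qed

lemma inner_trace: "(X::real^'c^'r) \<bullet> Y = trace (X ** transpose Y)"
  by (simp add: inner_vec_def trace_def matrix_matrix_mult_def transpose_def)

lemma inner_trace': "(X::real^'c^'r) \<bullet> Y = trace (transpose X ** Y)"
  by (simp add: trace_mul_sym[of "transpose X"] inner_trace[of Y X, symmetric] inner_commute)

definition lop :: "real^'k^'k \<Rightarrow> real^'k^'k \<Rightarrow> real^'k^'k" where
  "lop M X = M ** X + X ** transpose M"

definition goodM :: "real^'k^'k \<Rightarrow> bool" where
  "goodM M \<longleftrightarrow> (\<forall>X. lop M X = 0 \<longrightarrow> X = 0)"

lemma linear_lop: "linear (lop M)"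
  by (auto intro!: linearI simp: lop_def mm_add_right mm_add_left mm_scaleR_right mm_scaleR_left algebra_simps)

lemma lop_diff: "lop M (X - Y) = lop M X - lop M Y"
  by (simp add: lop_def mm_diff_right mm_diff_left algebra_simps)

lemma goodM_inj: "goodM M \<Longrightarrow> inj (lop M)"
  using linear_injective_0[OF linear_lop] unfolding goodM_def by blast

lemma lyap_sol:
  assumes "goodM M" shows "M ** lyap M W + lyap M W ** transpose M + W = 0"
proof -
  have "surj (lop M)" using linear_injective_imp_surjective[OF linear_lop goodM_inj[OF assms]] by simp
  then obtain X where X: "lop M X = - W" by (metis surjD)
  have ex: "M ** X + X ** transpose M + W = 0" using X by (simp add: lop_def)
  have "M ** (THE X. M ** X + X ** transpose M + W = 0) + (THE X. M ** X + X ** transpose M + W = 0) ** transpose M + W = 0"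
  proof (rule theI[of _ X])
    show "M ** X + X ** transpose M + W = 0" by (rule ex)
    fix Y assume "M ** Y + Y ** transpose M + W = 0"
    hence "lop M Y + W = lop M X + W" using ex by (simp add: lop_def)
    hence "lop M Y = lop M X" by simp
    thus "Y = X" using goodM_inj[OF assms] by (simp add: inj_eq)
  qed
  thus ?thesis unfolding lyap_def .
qed

lemma lyap_uniq:
  assumes "goodM M" and "M ** Y + Y ** transpose M + W = 0" shows "Y = lyap M W"
proof -
  have "lop M Y + W = 0" using assms(2) by (simp add: lop_def)
  moreover have "lop M (lyap M W) + W = 0" using lyap_sol[OF assms(1), of W] by (simp add: lop_def)
  ultimately have "lop M Y = lop M (lyap M W)" by (metis add_right_cancel)
  thus ?thesis using goodM_inj[OF assms(1)] by (simp add: inj_eq)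
qed

lemma lyap_sym:
  assumes "goodM M" and "transpose W = W" shows "transpose (lyap M W) = lyap M W"
proof (rule lyap_uniq[OF assms(1)])
  have "transpose (M ** lyap M W + lyap M W ** transpose M + W) = transpose 0"
    using lyap_sol[OF assms(1), of W] by (simp only:)
  hence "transpose (lyap M W) ** transpose M + M ** transpose (lyap M W) + W = 0"
    by (simp only: transpose_add matrix_transpose_mul Finite_Cartesian_Product.transpose_transpose assms(2) transpose_zero)
  thus "M ** transpose (lyap M W) + transpose (lyap M W) ** transpose M + W = 0"
    by (simp add: add_ac)
qed

lemma hurwitz_goodM: "hurwitz M \<Longrightarrow> goodM M"
  unfolding goodM_def lop_def by (blast intro: lyap_inj_hurwitz)

lemma hurwitz_transpose: "hurwitz M \<Longrightarrow> hurwitz (transpose M)"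
proof -
  assume h: "hurwitz M"
  have "Finite_Cartesian_Product.mat z - (\<chi> i j. complex_of_real (transpose M $ i $ j))
      = transpose (Finite_Cartesian_Product.mat z - (\<chi> i j. complex_of_real (M $ i $ j)))" for z
    by (simp add: Finite_Cartesian_Product.vec_eq_iff transpose_def Finite_Cartesian_Product.mat_def)
  hence "Determinants.det (Finite_Cartesian_Product.mat z - (\<chi> i j. complex_of_real (transpose M $ i $ j)))
     = Determinants.det (Finite_Cartesian_Product.mat z - (\<chi> i j. complex_of_real (M $ i $ j)))" for z
    by (simp only: Determinants.det_transpose)
  thus ?thesis using h unfolding hurwitz_def by (simp only:)
qed


lemma good_near:
  fixes M0 :: "real^'k^'k"
  assumes "goodM M0"
  obtains e d where "e > 0" "d > 0" "\<And>M X. norm (M - M0) < d \<Longrightarrow> e * norm X \<le> norm (lop M X)"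
proof -
  obtain B where B: "B > 0" "\<And>X. B * norm X \<le> norm (lop M0 X)"
    using linear_inj_bounded_below_pos[OF linear_lop goodM_inj[OF assms]] by blast
  obtain K1 where K1: "K1 > 0" "\<And>a b. norm ((a::real^'k^'k) ** (b::real^'k^'k)) \<le> norm a * norm b * K1"
    using bounded_bilinear.pos_bounded[OF bb_mm] by blast
  obtain K2 where K2: "K2 > 0" "\<And>a. norm (transpose (a::real^'k^'k)) \<le> norm a * K2"
    using bounded_linear.pos_bounded[OF bl_transpose] by blast
  define c where "c = K1 * (1 + K2)"
  have c: "c > 0" using K1 K2 unfolding c_def by simp
  define d where "d = B / (2 * c)"
  have d: "d > 0" using B c unfolding d_def by simp
  have dc: "d * c = B / 2" using c unfolding d_def by simp
  have main: "B/2 * norm X \<le> norm (lop M X)" if M: "norm (M - M0) < d" for M X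
  proof -
    have eq: "lop M X - lop M0 X = (M - M0) ** X + X ** transpose (M - M0)"
      by (simp add: lop_def mm_diff_left mm_diff_right transpose_diff algebra_simps)
    have n1: "norm ((M - M0) ** X) \<le> norm (M - M0) * norm X * K1" by (rule K1(2))
    have n2: "norm (X ** transpose (M - M0)) \<le> norm X * (norm (M - M0) * K2) * K1"
    proof -
      have "norm (X ** transpose (M - M0)) \<le> norm X * norm (transpose (M - M0)) * K1" by (rule K1(2))
      also have "\<dots> \<le> norm X * (norm (M - M0) * K2) * K1"
        using K1 K2(2)[of "M - M0"] by (intro mult_right_mono mult_left_mono) auto
      finally show ?thesis .
    qed
    have "norm (lop M X - lop M0 X) \<le> norm (M - M0) * (norm X * c)"
      unfolding eq c_def using norm_triangle_le[OF add_mono[OF n1 n2]] by (simp add: algebra_simps)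
    also have "\<dots> \<le> d * (norm X * c)"
      using M c by (intro mult_right_mono) auto
    also have "\<dots> = B/2 * norm X" using dc by (simp add: algebra_simps)
    finally have "norm (lop M X - lop M0 X) \<le> B/2 * norm X" .
    moreover have "norm (lop M0 X) \<le> norm (lop M X) + norm (lop M X - lop M0 X)"
      by (metis norm_minus_commute norm_triangle_sub)
    ultimately show ?thesis using B(2)[of X] by linarith
  qed
  show thesis
    by (rule that[of "B/2" d]) (use B d main in auto)
qed

lemma bound_good: "e > 0 \<Longrightarrow> (\<And>X. e * norm X \<le> norm (lop M X)) \<Longrightarrow> goodM M"
  unfolding goodM_def by (metis mult_le_0_iff norm_eq_zero norm_ge_zero norm_zero not_le order_antisym)

lemma tendsto_lop:
  fixes Af :: "'a \<Rightarrow> real^'k^'k"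
  assumes "(Af \<longlongrightarrow> A0) F" shows "((\<lambda>x. lop (Af x) P) \<longlongrightarrow> lop A0 P) F"
  unfolding lop_def
  by (intro tendsto_intros bounded_bilinear.tendsto[OF bb_mm] bounded_linear.tendsto[OF bl_transpose] assms)

lemma lyap_cont:
  fixes Af Wf :: "'a \<Rightarrow> real^'k^'k"
  assumes g: "goodM A0" and A: "(Af \<longlongrightarrow> A0) F" and W: "(Wf \<longlongrightarrow> W0) F"
  shows "eventually (\<lambda>x. goodM (Af x)) F" and "((\<lambda>x. lyap (Af x) (Wf x)) \<longlongrightarrow> lyap A0 W0) F"
proof -
  obtain e d where e: "e > 0" and d: "d > 0" and b: "\<And>M X. norm (M - A0) < d \<Longrightarrow> e * norm X \<le> norm (lop M X)"
    using good_near[OF g] by blast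
  have ev: "eventually (\<lambda>x. norm (Af x - A0) < d) F"
    using A d by (simp add: tendsto_iff dist_norm)
  show "eventually (\<lambda>x. goodM (Af x)) F"
    using ev by eventually_elim (use e b bound_good in blast)
  define P0 where "P0 = lyap A0 W0"
  have P0: "lop A0 P0 + W0 = 0" using lyap_sol[OF g, of W0] unfolding P0_def lop_def by simp
  define gf where "gf x = - Wf x - lop (Af x) P0" for x
  have gt: "(gf \<longlongrightarrow> - W0 - lop A0 P0) F"
    unfolding gf_def by (intro tendsto_intros W tendsto_lop A)
  have "lop A0 P0 = - W0" using P0 by (simp add: eq_neg_iff_add_eq_0)
  hence "- W0 - lop A0 P0 = 0" by simp
  hence gt0: "(gf \<longlongrightarrow> 0) F" using gt by simp
  have "((\<lambda>x. lyap (Af x) (Wf x) - P0) \<longlongrightarrow> 0) F"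
  proof (rule Lim_null_comparison)
    show "eventually (\<lambda>x. norm (lyap (Af x) (Wf x) - P0) \<le> (1/e) * norm (gf x)) F"
      using ev
    proof eventually_elim
      case (elim x)
      have gx: "goodM (Af x)" using b[OF elim] e bound_good by blast
      have "lop (Af x) (lyap (Af x) (Wf x)) + Wf x = 0"
        using lyap_sol[OF gx, of "Wf x"] unfolding lop_def by simp
      hence "lop (Af x) (lyap (Af x) (Wf x) - P0) = gf x"
        unfolding lop_diff gf_def by (simp add: algebra_simps eq_neg_iff_add_eq_0)
      hence "e * norm (lyap (Af x) (Wf x) - P0) \<le> norm (gf x)" using b[OF elim] by metis
      thus ?case using e by (simp add: field_simps)
    qed
    show "((\<lambda>x. 1 / e * norm (gf x)) \<longlongrightarrow> 0) F"
      using tendsto_mult_right_zero[OF tendsto_norm_zero[OF gt0], of "1/e"] by simp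
  qed
  thus "((\<lambda>x. lyap (Af x) (Wf x)) \<longlongrightarrow> lyap A0 W0) F"
    unfolding P0_def by (simp add: LIM_zero_iff)
qed



lemma prodcont:
  fixes pr :: "'b::real_normed_vector \<Rightarrow> 'c::real_normed_vector \<Rightarrow> 'd::real_normed_vector" and g :: "'a::real_normed_vector \<Rightarrow> 'b" and p :: "'a \<Rightarrow> 'c"
  assumes bb: "bounded_bilinear pr" and gd: "(g has_derivative g') (at x0)" and g0: "g x0 = 0"
    and pc: "(p \<longlongrightarrow> p x0) (at x0)"
  shows "((\<lambda>x. pr (g x) (p x)) has_derivative (\<lambda>h. pr (g' h) (p x0))) (at x0)"
proof -
  interpret bb: bounded_bilinear pr by (rule bb)
  have d1: "((\<lambda>x. pr (g x) (p x0)) has_derivative (\<lambda>h. pr (g' h) (p x0))) (at x0)"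
    by (rule bounded_linear.has_derivative[OF bb.bounded_linear_left gd])
  define r where "r x = pr (g x) (p x - p x0)" for x
  have r0: "r x0 = 0" unfolding r_def g0 by (simp add: bb.zero_left)
  obtain K where K: "K > 0" "\<And>a b. norm (pr a b) \<le> norm a * norm b * K" using bb.pos_bounded by blast
  have blg: "bounded_linear g'" using gd by (rule has_derivative_bounded_linear)
  obtain Kg where Kg: "Kg > 0" "\<And>h. norm (g' h) \<le> norm h * Kg"
    using bounded_linear.pos_bounded[OF blg] by blast
  define q where "q y = norm (g y - g x0 - g' (y - x0)) / norm (y - x0)" for y
  have q0: "(q \<longlongrightarrow> 0) (at x0)" using gd unfolding has_derivative_iff_norm q_def by blast
  have pz: "((\<lambda>y. norm (p y - p x0)) \<longlongrightarrow> 0) (at x0)"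
    by (intro tendsto_norm_zero LIM_zero pc)
  have rd: "(r has_derivative (\<lambda>h. 0)) (at x0)"
    unfolding has_derivative_iff_norm
  proof (intro conjI)
    show "bounded_linear (\<lambda>h::'a. 0::'d)" by (rule bounded_linear_zero) 
    show "((\<lambda>y. norm (r y - r x0 - 0) / norm (y - x0)) \<longlongrightarrow> 0) (at x0)"
    proof (rule Lim_null_comparison)
      show "eventually (\<lambda>y. norm (norm (r y - r x0 - 0) / norm (y - x0)) \<le> (q y + Kg) * norm (p y - p x0) * K) (at x0)"
      proof (rule always_eventually, rule allI)
        fix y
        show "norm (norm (r y - r x0 - 0) / norm (y - x0)) \<le> (q y + Kg) * norm (p y - p x0) * K"
        proof (cases "y = x0")
          case True thus ?thesis using K Kg unfolding q_def by simp
        next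
          case False
          hence n: "norm (y - x0) > 0" by simp
          have "norm (g y) \<le> norm (g y - g x0 - g' (y - x0)) + norm (g' (y - x0))"
            using g0 norm_triangle_ineq[of "g y - g' (y - x0)" "g' (y - x0)"] by simp
          also have "\<dots> \<le> q y * norm (y - x0) + norm (y - x0) * Kg"
            using n Kg(2)[of "y - x0"] unfolding q_def by simp
          finally have gy: "norm (g y) / norm (y - x0) \<le> q y + Kg" using n by (simp add: field_simps)
          have "norm (r y) \<le> norm (g y) * norm (p y - p x0) * K" unfolding r_def by (rule K(2))
          hence "norm (r y) / norm (y - x0) \<le> (norm (g y) / norm (y - x0)) * norm (p y - p x0) * K"
            using n by (simp add: field_simps)
          also have "\<dots> \<le> (q y + Kg) * norm (p y - p x0) * K"
            using gy K by (intro mult_right_mono) auto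
          finally show ?thesis using r0 by simp
        qed
      qed
      show "((\<lambda>y. (q y + Kg) * norm (p y - p x0) * K) \<longlongrightarrow> 0) (at x0)"
        using tendsto_mult[OF tendsto_mult[OF tendsto_add[OF q0 tendsto_const] pz] tendsto_const[of K]] by simp
    qed
  qed
  have "((\<lambda>x. pr (g x) (p x0) + r x) has_derivative (\<lambda>h. pr (g' h) (p x0) + 0)) (at x0)"
    by (rule has_derivative_add[OF d1 rd])
  moreover have "(\<lambda>x. pr (g x) (p x0) + r x) = (\<lambda>x. pr (g x) (p x))"
    unfolding r_def by (simp add: bb.diff_right)
  ultimately show ?thesis by simp
qed

lemma trace_scaleR: "trace (c *\<^sub>R (A::real^'n^'n)) = c * trace A"
  by (simp add: trace_def sum_distrib_left)

lemma bb_tr1: "bounded_bilinear (\<lambda>(u::real^'n^'m) (P::real^'m^'n). trace (u ** P))"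
proof -
  have "bilinear (\<lambda>(u::real^'n^'m) (P::real^'m^'n). trace (u ** P))"
    unfolding bilinear_def
    by (auto intro!: linearI simp: mm_add_right mm_add_left mm_scaleR_right mm_scaleR_left trace_add trace_scaleR)
  thus ?thesis using bilinear_conv_bounded_bilinear by blast
qed

lemma bb_tr2: "bounded_bilinear (\<lambda>(u::real^'k^'k) (P::real^'k^'k). trace (Q ** u ** P))"
proof -
  have "bilinear (\<lambda>(u::real^'k^'k) (P::real^'k^'k). trace (Q ** u ** P))"
    unfolding bilinear_def
    by (auto intro!: linearI simp: mm_add_right mm_add_left mm_scaleR_right mm_scaleR_left trace_add trace_scaleR)
  thus ?thesis using bilinear_conv_bounded_bilinear by blast
qed

lemma bb_tr3: "bounded_bilinear (\<lambda>(u::real^'k^'k) (P::real^'k^'k). trace (Q ** P ** transpose u))"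
proof -
  have "bilinear (\<lambda>(u::real^'k^'k) (P::real^'k^'k). trace (Q ** P ** transpose u))"
    unfolding bilinear_def
    by (auto intro!: linearI simp: mm_add_right mm_add_left mm_scaleR_right mm_scaleR_left trace_add
        trace_scaleR transpose_add transpose_scalar)
  thus ?thesis using bilinear_conv_bounded_bilinear by blast
qed

lemma trace_neg: "trace (- (A::real^'n^'n)) = - trace A"
  by (simp add: trace_def sum_negf)

lemma mm_neg_left: "(- (A::real^'m^'n)) ** (B::real^'p^'m) = - (A ** B)"
  by (simp add: Finite_Cartesian_Product.vec_eq_iff matrix_matrix_mult_def sum_negf)
lemma mm_neg_right: "(A::real^'m^'n) ** (- (B::real^'p^'m)) = - (A ** B)"
  by (simp add: Finite_Cartesian_Product.vec_eq_iff matrix_matrix_mult_def sum_negf)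

lemma key_id:
  fixes A A0 P Q V V0 W :: "real^'k^'k"
  assumes eP: "A ** P + P ** transpose A + W = 0" and eQ: "transpose A0 ** Q + Q ** A0 + V0 = 0"
  shows "trace (V ** P) = trace ((V - V0) ** P) + trace (Q ** W) + trace (Q ** (A - A0) ** P)
     + trace (Q ** P ** transpose (A - A0))"
proof -
  have W: "W = - (A ** P + P ** transpose A)" using eP by (metis add.commute eq_neg_iff_add_eq_0)
  have V0: "V0 = - (transpose A0 ** Q + Q ** A0)" using eQ by (metis add.commute eq_neg_iff_add_eq_0)
  have sym: "trace (transpose A0 ** Q ** P) = trace (Q ** P ** transpose A0)"
    using trace_mul_sym[of "transpose A0" "Q ** P"] by (simp add: matrix_mul_assoc)
  show ?thesis unfolding W V0
    by (simp add: mm_diff_left mm_diff_right mm_add_left mm_add_right mm_neg_left mm_neg_right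
        trace_add trace_sub trace_neg transpose_diff matrix_mul_assoc sym)
qed



lemma cost_deriv:
  fixes Af :: "'a::real_normed_vector \<Rightarrow> real^'k^'k" and Bf :: "'a \<Rightarrow> real^'m^'k"
    and Gf :: "'a \<Rightarrow> real^'k^'p"
  assumes Ad: "(Af has_derivative Af') (at x0)" and Bd: "(Bf has_derivative Bf') (at x0)"
    and Gd: "(Gf has_derivative Gf') (at x0)"
    and g: "goodM (Af x0)"
    and Qe: "transpose (Af x0) ** Q + Q ** Af x0 + transpose (Gf x0) ** Gf x0 = 0"
  defines "P0 \<equiv> lyap (Af x0) (Bf x0 ** transpose (Bf x0))"
  shows "((\<lambda>x. trace (Gf x ** lyap (Af x) (Bf x ** transpose (Bf x)) ** transpose (Gf x))) has_derivative
    (\<lambda>h. trace ((transpose (Gf' h) ** Gf x0 + transpose (Gf x0) ** Gf' h) ** P0)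
      + trace (Q ** (Bf' h ** transpose (Bf x0) + Bf x0 ** transpose (Bf' h)))
      + trace (Q ** Af' h ** P0) + trace (Q ** P0 ** transpose (Af' h)))) (at x0)"
proof -
  define Wf where "Wf x = Bf x ** transpose (Bf x)" for x
  define Vf where "Vf x = transpose (Gf x) ** Gf x" for x
  define Pf where "Pf x = lyap (Af x) (Wf x)" for x
  have P0: "P0 = Pf x0" unfolding P0_def Pf_def Wf_def ..
  have Ac: "(Af \<longlongrightarrow> Af x0) (at x0)"
    using has_derivative_continuous[OF Ad] by (simp add: continuous_at)
  have Bc: "(Bf \<longlongrightarrow> Bf x0) (at x0)"
    using has_derivative_continuous[OF Bd] by (simp add: continuous_at)
  have Wc: "(Wf \<longlongrightarrow> Wf x0) (at x0)" unfolding Wf_def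
    by (intro bounded_bilinear.tendsto[OF bb_mm] bounded_linear.tendsto[OF bl_transpose] Bc)
  have ev: "eventually (\<lambda>x. goodM (Af x)) (at x0)" and Pc: "(Pf \<longlongrightarrow> Pf x0) (at x0)"
    using lyap_cont[OF g Ac Wc] unfolding Pf_def by auto
  define F where "F x = trace ((Vf x - Vf x0) ** Pf x) + trace (Q ** Wf x)
      + trace (Q ** (Af x - Af x0) ** Pf x) + trace (Q ** Pf x ** transpose (Af x - Af x0))" for x
  have costV: "trace (Gf x ** lyap (Af x) (Bf x ** transpose (Bf x)) ** transpose (Gf x)) = trace (Vf x ** Pf x)" for x
    unfolding Vf_def Pf_def Wf_def
    using trace_mul_sym[of "Gf x ** lyap (Af x) (Bf x ** transpose (Bf x))" "transpose (Gf x)"]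
    by (simp add: matrix_mul_assoc)
  have eqF: "trace (Gf x ** lyap (Af x) (Bf x ** transpose (Bf x)) ** transpose (Gf x)) = F x"
    if gx: "goodM (Af x)" for x
  proof -
    have eP: "Af x ** Pf x + Pf x ** transpose (Af x) + Wf x = 0" unfolding Pf_def by (rule lyap_sol[OF gx])
    have eQ: "transpose (Af x0) ** Q + Q ** Af x0 + Vf x0 = 0" unfolding Vf_def by (rule Qe)
    show ?thesis unfolding costV F_def by (rule key_id[OF eP eQ])
  qed
  have Vd: "(Vf has_derivative (\<lambda>h. transpose (Gf x0) ** Gf' h + transpose (Gf' h) ** Gf x0)) (at x0)"
    unfolding Vf_def
    by (rule bounded_bilinear.FDERIV[OF bb_mm bounded_linear.has_derivative[OF bl_transpose Gd] Gd])
  have Wd: "(Wf has_derivative (\<lambda>h. Bf x0 ** transpose (Bf' h) + Bf' h ** transpose (Bf x0))) (at x0)"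
    unfolding Wf_def
    by (rule bounded_bilinear.FDERIV[OF bb_mm Bd bounded_linear.has_derivative[OF bl_transpose Bd]])
  have d1: "((\<lambda>x. trace ((Vf x - Vf x0) ** Pf x)) has_derivative
      (\<lambda>h. trace ((transpose (Gf x0) ** Gf' h + transpose (Gf' h) ** Gf x0) ** Pf x0))) (at x0)"
    by (rule prodcont[OF bb_tr1 has_derivative_diff[OF Vd has_derivative_const, simplified] _ Pc]) simp
  have d2: "((\<lambda>x. trace (Q ** Wf x)) has_derivative
      (\<lambda>h. trace (Q ** (Bf x0 ** transpose (Bf' h) + Bf' h ** transpose (Bf x0))))) (at x0)"
    by (rule bounded_linear.has_derivative[OF bounded_bilinear.bounded_linear_right[OF bb_tr1] Wd])
  have d3: "((\<lambda>x. trace (Q ** (Af x - Af x0) ** Pf x)) has_derivative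
      (\<lambda>h. trace (Q ** Af' h ** Pf x0))) (at x0)"
    by (rule prodcont[OF bb_tr2 has_derivative_diff[OF Ad has_derivative_const, simplified] _ Pc]) simp
  have d4: "((\<lambda>x. trace (Q ** Pf x ** transpose (Af x - Af x0))) has_derivative
      (\<lambda>h. trace (Q ** Pf x0 ** transpose (Af' h)))) (at x0)"
    by (rule prodcont[OF bb_tr3 has_derivative_diff[OF Ad has_derivative_const, simplified] _ Pc]) simp
  have dF: "(F has_derivative (\<lambda>h. trace ((transpose (Gf x0) ** Gf' h + transpose (Gf' h) ** Gf x0) ** Pf x0)
      + trace (Q ** (Bf x0 ** transpose (Bf' h) + Bf' h ** transpose (Bf x0)))
      + trace (Q ** Af' h ** Pf x0) + trace (Q ** Pf x0 ** transpose (Af' h)))) (at x0)"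
    unfolding F_def by (intro has_derivative_add d1 d2 d3 d4)
  have "((\<lambda>x. trace (Gf x ** lyap (Af x) (Bf x ** transpose (Bf x)) ** transpose (Gf x))) has_derivative
      (\<lambda>h. trace ((transpose (Gf x0) ** Gf' h + transpose (Gf' h) ** Gf x0) ** Pf x0)
      + trace (Q ** (Bf x0 ** transpose (Bf' h) + Bf' h ** transpose (Bf x0)))
      + trace (Q ** Af' h ** Pf x0) + trace (Q ** Pf x0 ** transpose (Af' h)))) (at x0)"
  proof (rule has_derivative_transform_eventually[OF dF])
    show "\<forall>\<^sub>F x' in at x0. F x' = trace (Gf x' ** lyap (Af x') (Bf x' ** transpose (Bf x')) ** transpose (Gf x'))"
      using ev by eventually_elim (simp add: eqF)
    show "F x0 = trace (Gf x0 ** lyap (Af x0) (Bf x0 ** transpose (Bf x0)) ** transpose (Gf x0))"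
      using eqF[OF g] by simp
  qed simp
  thus ?thesis unfolding P0 by (simp add: add_ac)
qed



lemma sum_UNIV_Plus: "(\<Sum>x\<in>(UNIV::('a::finite + 'b::finite) set). f x) = (\<Sum>a\<in>UNIV. f (Inl a)) + (\<Sum>b\<in>UNIV. f (Inr b))"
proof -
  have "(\<Sum>x\<in>(UNIV::('a + 'b) set). f x) = (\<Sum>x\<in>(UNIV <+> UNIV). f x)" by simp
  also have "\<dots> = (\<Sum>a\<in>UNIV. f (Inl a)) + (\<Sum>b\<in>UNIV. f (Inr b))"
    by (subst sum.Plus) (auto simp: comp_def)
  finally show ?thesis .
qed

definition upr :: "real^'c^('a::finite + 'b::finite) \<Rightarrow> real^'c^'a" where "upr M = (\<chi> i j. M$(Inl i)$j)"
definition lowr :: "real^'c^('a::finite + 'b::finite) \<Rightarrow> real^'c^'b" where "lowr M = (\<chi> i j. M$(Inr i)$j)"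
definition lcol :: "real^('a::finite + 'b::finite)^'r \<Rightarrow> real^'a^'r" where "lcol M = (\<chi> i j. M$i$(Inl j))"
definition rcol :: "real^('a::finite + 'b::finite)^'r \<Rightarrow> real^'b^'r" where "rcol M = (\<chi> i j. M$i$(Inr j))"

lemma inner_vcat: "M \<bullet> vcat X Y = upr M \<bullet> X + lowr M \<bullet> Y"
  by (simp add: inner_vec_def sum_UNIV_Plus vcat_def upr_def lowr_def)

lemma inner_hcat: "M \<bullet> hcat X Y = lcol M \<bullet> X + rcol M \<bullet> Y"
  by (simp add: inner_vec_def sum_UNIV_Plus hcat_def lcol_def rcol_def sum.distrib)

lemma inner_block: "M \<bullet> block a b c d = blk11 M \<bullet> a + blk12 M \<bullet> b + blk21 M \<bullet> c + blk22 M \<bullet> d"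
  unfolding block_def inner_vcat inner_hcat
  by (simp add: upr_def lowr_def lcol_def rcol_def blk11_def blk12_def blk21_def blk22_def)

lemma lowr_mm: "lowr (Q ** B) = lowr Q ** B"
  by (simp add: lowr_def Finite_Cartesian_Product.vec_eq_iff matrix_matrix_mult_def)
lemma rcol_mm: "rcol (G ** P) = G ** rcol P"
  by (simp add: rcol_def Finite_Cartesian_Product.vec_eq_iff matrix_matrix_mult_def)
lemma brow2_lowr: "brow2 Q = lowr Q" by (simp add: brow2_def lowr_def)
lemma bcol2_rcol: "bcol2 P = rcol P" by (simp add: bcol2_def rcol_def)

lemma inner_mm_right: "(X::real^'c^'r) \<bullet> ((Y::real^'m^'r) ** Z) = (X ** transpose Z) \<bullet> Y"
  by (simp add: inner_trace matrix_transpose_mul matrix_mul_assoc)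
lemma inner_mm_left: "(X::real^'c^'r) \<bullet> ((Y::real^'m^'r) ** Z) = (transpose Y ** X) \<bullet> Z"
  by (simp add: inner_trace' matrix_transpose_mul matrix_mul_assoc)

lemma vcat_add: "vcat a b + vcat c d = vcat (a + c) (b + d)"
  by (simp add: vcat_def Finite_Cartesian_Product.vec_eq_iff split: sum.split)
lemma vcat_scaleR: "r *\<^sub>R vcat a b = vcat (r *\<^sub>R a) (r *\<^sub>R b)"
  by (simp add: vcat_def Finite_Cartesian_Product.vec_eq_iff split: sum.split)
lemma hcat_add: "hcat a b + hcat c d = hcat (a + c) (b + d)"
  by (simp add: hcat_def Finite_Cartesian_Product.vec_eq_iff split: sum.split)
lemma hcat_scaleR: "r *\<^sub>R hcat a b = hcat (r *\<^sub>R a) (r *\<^sub>R b)"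
  by (simp add: hcat_def Finite_Cartesian_Product.vec_eq_iff split: sum.split)
lemma block_add: "block a b c d + block a' b' c' d' = block (a + a') (b + b') (c + c') (d + d')"
  by (simp add: block_def vcat_add hcat_add)
lemma block_scaleR: "r *\<^sub>R block a b c d = block (r *\<^sub>R a) (r *\<^sub>R b) (r *\<^sub>R c) (r *\<^sub>R d)"
  by (simp add: block_def vcat_scaleR hcat_scaleR)

lemma trace_zero[simp]: "trace (0::real^'n^'n) = 0" by (simp add: trace_def)

lemma lin_deriv: "bounded_linear L \<Longrightarrow> (\<And>x. f x = K + L x) \<Longrightarrow> (f has_derivative L) F"
proof -
  assume L: "bounded_linear L" and f: "\<And>x. f x = K + L x"
  have "((\<lambda>x. K + L x) has_derivative (\<lambda>h. 0 + L h)) F"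
    by (intro has_derivative_add has_derivative_const bounded_linear.has_derivative[OF L] has_derivative_ident)
  moreover have "f = (\<lambda>x. K + L x)" using f by (rule ext)
  ultimately show ?thesis by simp
qed

lemma bl_from_linear: "linear (L::'a::euclidean_space \<Rightarrow> 'b::real_normed_vector) \<Longrightarrow> bounded_linear L"
  using linear_conv_bounded_linear by blast



lemma two_trace:
  fixes P Q E :: "real^'k^'k"
  assumes "transpose P = P" "transpose Q = Q"
  shows "trace (Q ** E ** P) + trace (Q ** P ** transpose E) = 2 * ((Q ** P) \<bullet> E)"
proof -
  have 1: "trace (Q ** P ** transpose E) = (Q ** P) \<bullet> E" by (simp add: inner_trace)
  have "trace (Q ** E ** P) = trace (P ** (Q ** E))" by (rule trace_mul_sym)
  also have "\<dots> = trace (transpose (Q ** P) ** E)"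
    using assms by (simp add: matrix_transpose_mul matrix_mul_assoc)
  also have "\<dots> = (Q ** P) \<bullet> E" by (simp add: inner_trace')
  finally show ?thesis using 1 by simp
qed

lemma Bterm:
  fixes Q :: "real^'k^'k" and B0 Bh :: "real^'m^'k"
  assumes "transpose Q = Q"
  shows "trace (Q ** (Bh ** transpose B0 + B0 ** transpose Bh)) = 2 * ((Q ** B0) \<bullet> Bh)"
proof -
  have "trace (Q ** (Bh ** transpose B0)) = trace (transpose B0 ** (Q ** Bh))"
    by (simp add: matrix_mul_assoc trace_mul_sym[of "Q ** Bh"])
  also have "\<dots> = trace (transpose (Q ** B0) ** Bh)"
    using assms by (simp add: matrix_transpose_mul matrix_mul_assoc)
  also have "\<dots> = (Q ** B0) \<bullet> Bh" by (simp add: inner_trace')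
  finally have 1: "trace (Q ** (Bh ** transpose B0)) = (Q ** B0) \<bullet> Bh" .
  have 2: "trace (Q ** (B0 ** transpose Bh)) = (Q ** B0) \<bullet> Bh"
    by (simp add: inner_trace matrix_mul_assoc)
  show ?thesis using 1 2 by (simp add: mm_add_right trace_add)
qed

lemma Gterm:
  fixes P :: "real^'k^'k" and G0 Gh :: "real^'k^'p"
  assumes "transpose P = P"
  shows "trace ((transpose Gh ** G0 + transpose G0 ** Gh) ** P) = 2 * ((G0 ** P) \<bullet> Gh)"
proof -
  have 1: "trace (transpose Gh ** G0 ** P) = (G0 ** P) \<bullet> Gh"
    using inner_trace'[of Gh "G0 ** P"] inner_commute[of Gh "G0 ** P"] by (simp add: matrix_mul_assoc)
  have "trace (transpose G0 ** Gh ** P) = trace ((Gh ** P) ** transpose G0)"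
    by (simp add: matrix_mul_assoc[symmetric] trace_mul_sym[of "transpose G0"])
  also have "\<dots> = trace (Gh ** transpose (G0 ** P))"
    using assms by (simp add: matrix_transpose_mul matrix_mul_assoc)
  also have "\<dots> = (G0 ** P) \<bullet> Gh" using inner_trace[of Gh "G0 ** P"] inner_commute[of Gh "G0 ** P"] by simp
  finally have 2: "trace (transpose G0 ** Gh ** P) = (G0 ** P) \<bullet> Gh" .
  show ?thesis using 1 2 by (simp add: mm_add_left trace_add)
qed

theorem lemma3:
  fixes A :: "real^'n^'n" and B1 :: "real^'m1^'n" and B2 :: "real^'m2^'n"
    and C :: "real^'n^'p" and D :: "real^'m1^'p"
    and C0 :: "real^'n^'p0" and D0 :: "real^'m2^'p0"
    and a :: "real^'n^'n" and b :: "real^('m2+'p)^'n" and c :: "real^'n^'m2"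
  assumes "hurwitz (clA A B2 C a b c)"
  defines "P \<equiv> gramP A B1 B2 C D a b c"
      and "Q \<equiv> gramQ A B2 C C0 D0 a b c"
      and "H \<equiv> Hmat A B1 B2 C D C0 D0 a b c"
  shows "((\<lambda>x. cost A B1 B2 C D C0 D0 x b c)
            has_derivative (\<lambda>X. (2 *\<^sub>R blk22 H) \<bullet> X)) (at a)
     \<and> ((\<lambda>y. cost A B1 B2 C D C0 D0 a y c)
            has_derivative (\<lambda>Y. (2 *\<^sub>R (blk21 H ** transpose (bfC C)
                 + brow2 Q ** clB B1 B2 D b ** transpose (bfD D))) \<bullet> Y)) (at b)
     \<and> ((\<lambda>z. cost A B1 B2 C D C0 D0 a b z)
            has_derivative (\<lambda>Z. (2 *\<^sub>R (transpose B2 ** blk12 H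
                 + transpose D0 ** clC C0 D0 c ** bcol2 P)) \<bullet> Z)) (at c)"
proof -
  define Am where "Am = clA A B2 C a b c"
  define Bm where "Bm = clB B1 B2 D b"
  define Cm where "Cm = clC C0 D0 c"
  have hw: "hurwitz Am" using assms(1) unfolding Am_def .
  have gA: "goodM Am" by (rule hurwitz_goodM[OF hw])
  have gAT: "goodM (transpose Am)" by (rule hurwitz_goodM[OF hurwitz_transpose[OF hw]])
  have Pd: "P = lyap Am (Bm ** transpose Bm)" unfolding P_def gramP_def Am_def Bm_def ..
  have Qd: "Q = lyap (transpose Am) (transpose Cm ** Cm)" unfolding Q_def gramQ_def Am_def Cm_def ..
  have Hd: "H = Q ** P" unfolding H_def Hmat_def P_def Q_def ..
  have Qe: "transpose Am ** Q + Q ** Am + transpose Cm ** Cm = 0"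
    using lyap_sol[OF gAT, of "transpose Cm ** Cm"] unfolding Qd by simp
  have Psym: "transpose P = P" unfolding Pd
    by (rule lyap_sym[OF gA]) (simp add: matrix_transpose_mul)
  have Qsym: "transpose Q = Q" unfolding Qd
    by (rule lyap_sym[OF gAT]) (simp add: matrix_transpose_mul)
  have zB: "((\<lambda>_::'x::real_normed_vector. Bm) has_derivative (\<lambda>h. 0)) F" for F by (rule has_derivative_const)
  have zG: "((\<lambda>_::'x::real_normed_vector. Cm) has_derivative (\<lambda>h. 0)) F" for F by (rule has_derivative_const)
  have da: "((\<lambda>x. clA A B2 C x b c) has_derivative (\<lambda>h. block 0 0 0 h)) (at a)"
  proof (rule lin_deriv)
    show "bounded_linear (\<lambda>h::real^'n^'n. block 0 0 0 h)"
      by (rule bl_from_linear) (auto intro!: linearI simp: block_add block_scaleR)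
    show "clA A B2 C x b c = block A (B2 ** c) (b ** bfC C) 0 + block 0 0 0 x" for x
      by (simp add: clA_def block_add)
  qed
  have A1: "((\<lambda>x. cost A B1 B2 C D C0 D0 x b c) has_derivative (\<lambda>X. (2 *\<^sub>R blk22 H) \<bullet> X)) (at a)"
  proof -
    have "((\<lambda>x. trace ((\<lambda>_. Cm) x ** lyap (clA A B2 C x b c) ((\<lambda>_. Bm) x ** transpose ((\<lambda>_. Bm) x)) ** transpose ((\<lambda>_. Cm) x))) has_derivative
      (\<lambda>h. trace ((transpose 0 ** Cm + transpose Cm ** 0) ** P)
      + trace (Q ** (0 ** transpose Bm + Bm ** transpose 0))
      + trace (Q ** block 0 0 0 h ** P) + trace (Q ** P ** transpose (block 0 0 0 h)))) (at a)"
      using cost_deriv[OF da zB zG, of Q] gA Qe unfolding Am_def Pd Am_def by simp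
    moreover have "(\<lambda>x. cost A B1 B2 C D C0 D0 x b c) = (\<lambda>x. trace ((\<lambda>_. Cm) x ** lyap (clA A B2 C x b c) ((\<lambda>_. Bm) x ** transpose ((\<lambda>_. Bm) x)) ** transpose ((\<lambda>_. Cm) x)))"
      unfolding cost_def gramP_def Bm_def Cm_def ..
    moreover have "(\<lambda>h. trace ((transpose 0 ** Cm + transpose Cm ** 0) ** P)
      + trace (Q ** (0 ** transpose Bm + Bm ** transpose 0))
      + trace (Q ** block 0 0 0 h ** P) + trace (Q ** P ** transpose (block 0 0 0 h))) = (\<lambda>X. (2 *\<^sub>R blk22 H) \<bullet> X)"
    proof
      fix h :: "real^'n^'n"
      show "trace ((transpose 0 ** Cm + transpose Cm ** 0) ** P)
      + trace (Q ** (0 ** transpose Bm + Bm ** transpose 0))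
      + trace (Q ** block 0 0 0 h ** P) + trace (Q ** P ** transpose (block 0 0 0 h)) = (2 *\<^sub>R blk22 H) \<bullet> h"
        using two_trace[OF Psym Qsym, of "block 0 0 0 h"] by (simp add: Hd inner_block)
    qed
    ultimately show ?thesis by simp
  qed
  have db: "((\<lambda>y. clA A B2 C a y c) has_derivative (\<lambda>h. block 0 0 (h ** bfC C) 0)) (at b)"
  proof (rule lin_deriv)
    show "bounded_linear (\<lambda>h::real^('m2+'p)^'n. block 0 0 (h ** bfC C) 0)"
      by (rule bl_from_linear) (auto intro!: linearI simp: block_add block_scaleR mm_add_left mm_scaleR_left)
    show "clA A B2 C a y c = block A (B2 ** c) 0 a + block 0 0 (y ** bfC C) 0" for y
      by (simp add: clA_def block_add)
  qed
  have dbB: "((\<lambda>y. clB B1 B2 D y) has_derivative (\<lambda>h. vcat 0 (h ** bfD D))) (at b)"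
  proof (rule lin_deriv)
    show "bounded_linear (\<lambda>h::real^('m2+'p)^'n. vcat 0 (h ** bfD D))"
      by (rule bl_from_linear) (auto intro!: linearI simp: vcat_add vcat_scaleR mm_add_left mm_scaleR_left)
    show "clB B1 B2 D y = vcat (hcat B1 B2) 0 + vcat 0 (y ** bfD D)" for y
      by (simp add: clB_def vcat_add)
  qed
  have A2: "((\<lambda>y. cost A B1 B2 C D C0 D0 a y c)
            has_derivative (\<lambda>Y. (2 *\<^sub>R (blk21 H ** transpose (bfC C)
                 + brow2 Q ** clB B1 B2 D b ** transpose (bfD D))) \<bullet> Y)) (at b)"
  proof -
    have "((\<lambda>y. trace ((\<lambda>_. Cm) y ** lyap (clA A B2 C a y c) (clB B1 B2 D y ** transpose (clB B1 B2 D y)) ** transpose ((\<lambda>_. Cm) y))) has_derivative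
      (\<lambda>h. trace ((transpose 0 ** Cm + transpose Cm ** 0) ** P)
      + trace (Q ** (vcat 0 (h ** bfD D) ** transpose Bm + Bm ** transpose (vcat 0 (h ** bfD D))))
      + trace (Q ** block 0 0 (h ** bfC C) 0 ** P) + trace (Q ** P ** transpose (block 0 0 (h ** bfC C) 0)))) (at b)"
      using cost_deriv[OF db dbB zG, of Q] gA Qe unfolding Am_def Pd Bm_def by simp
    moreover have "(\<lambda>y. cost A B1 B2 C D C0 D0 a y c) = (\<lambda>y. trace ((\<lambda>_. Cm) y ** lyap (clA A B2 C a y c) (clB B1 B2 D y ** transpose (clB B1 B2 D y)) ** transpose ((\<lambda>_. Cm) y)))"
      unfolding cost_def gramP_def Cm_def ..
    moreover have "(\<lambda>h. trace ((transpose 0 ** Cm + transpose Cm ** 0) ** P)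
      + trace (Q ** (vcat 0 (h ** bfD D) ** transpose Bm + Bm ** transpose (vcat 0 (h ** bfD D))))
      + trace (Q ** block 0 0 (h ** bfC C) 0 ** P) + trace (Q ** P ** transpose (block 0 0 (h ** bfC C) 0)))
      = (\<lambda>Y. (2 *\<^sub>R (blk21 H ** transpose (bfC C)
                 + brow2 Q ** clB B1 B2 D b ** transpose (bfD D))) \<bullet> Y)"
    proof
      fix h :: "real^('m2+'p)^'n"
      have e1: "trace (Q ** (vcat 0 (h ** bfD D) ** transpose Bm + Bm ** transpose (vcat 0 (h ** bfD D))))
          = 2 * ((brow2 Q ** Bm ** transpose (bfD D)) \<bullet> h)"
        using Bterm[OF Qsym, of "vcat 0 (h ** bfD D)" Bm]
        by (simp add: inner_vcat lowr_mm brow2_lowr inner_mm_right)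
      have e2: "trace (Q ** block 0 0 (h ** bfC C) 0 ** P) + trace (Q ** P ** transpose (block 0 0 (h ** bfC C) 0))
          = 2 * ((blk21 H ** transpose (bfC C)) \<bullet> h)"
        using two_trace[OF Psym Qsym, of "block 0 0 (h ** bfC C) 0"]
        by (simp add: inner_block inner_mm_right Hd)
      show "trace ((transpose 0 ** Cm + transpose Cm ** 0) ** P)
      + trace (Q ** (vcat 0 (h ** bfD D) ** transpose Bm + Bm ** transpose (vcat 0 (h ** bfD D))))
      + trace (Q ** block 0 0 (h ** bfC C) 0 ** P) + trace (Q ** P ** transpose (block 0 0 (h ** bfC C) 0))
      = (2 *\<^sub>R (blk21 H ** transpose (bfC C)
                 + brow2 Q ** clB B1 B2 D b ** transpose (bfD D))) \<bullet> h"
        using e1 e2 unfolding Bm_def by (simp add: inner_add_left algebra_simps)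
    qed
    ultimately show ?thesis by simp
  qed
  have dc: "((\<lambda>z. clA A B2 C a b z) has_derivative (\<lambda>h. block 0 (B2 ** h) 0 0)) (at c)"
  proof (rule lin_deriv)
    show "bounded_linear (\<lambda>h::real^'n^'m2. block 0 (B2 ** h) 0 0)"
      by (rule bl_from_linear) (auto intro!: linearI simp: block_add block_scaleR mm_add_right mm_scaleR_right)
    show "clA A B2 C a b z = block A 0 (b ** bfC C) a + block 0 (B2 ** z) 0 0" for z
      by (simp add: clA_def block_add)
  qed
  have dcG: "((\<lambda>z. clC C0 D0 z) has_derivative (\<lambda>h. hcat 0 (D0 ** h))) (at c)"
  proof (rule lin_deriv)
    show "bounded_linear (\<lambda>h::real^'n^'m2. hcat 0 (D0 ** h))"
      by (rule bl_from_linear) (auto intro!: linearI simp: hcat_add hcat_scaleR mm_add_right mm_scaleR_right)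
    show "clC C0 D0 z = hcat C0 0 + hcat 0 (D0 ** z)" for z
      by (simp add: clC_def hcat_add)
  qed
  have A3: "((\<lambda>z. cost A B1 B2 C D C0 D0 a b z)
            has_derivative (\<lambda>Z. (2 *\<^sub>R (transpose B2 ** blk12 H
                 + transpose D0 ** clC C0 D0 c ** bcol2 P)) \<bullet> Z)) (at c)"
  proof -
    have "((\<lambda>z. trace (clC C0 D0 z ** lyap (clA A B2 C a b z) ((\<lambda>_. Bm) z ** transpose ((\<lambda>_. Bm) z)) ** transpose (clC C0 D0 z))) has_derivative
      (\<lambda>h. trace ((transpose (hcat 0 (D0 ** h)) ** Cm + transpose Cm ** hcat 0 (D0 ** h)) ** P)
      + trace (Q ** (0 ** transpose Bm + Bm ** transpose 0))
      + trace (Q ** block 0 (B2 ** h) 0 0 ** P) + trace (Q ** P ** transpose (block 0 (B2 ** h) 0 0)))) (at c)"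
      using cost_deriv[OF dc zB dcG, of Q] gA Qe unfolding Am_def Pd Cm_def by simp
    moreover have "(\<lambda>z. cost A B1 B2 C D C0 D0 a b z) = (\<lambda>z. trace (clC C0 D0 z ** lyap (clA A B2 C a b z) ((\<lambda>_. Bm) z ** transpose ((\<lambda>_. Bm) z)) ** transpose (clC C0 D0 z)))"
      unfolding cost_def gramP_def Bm_def ..
    moreover have "(\<lambda>h. trace ((transpose (hcat 0 (D0 ** h)) ** Cm + transpose Cm ** hcat 0 (D0 ** h)) ** P)
      + trace (Q ** (0 ** transpose Bm + Bm ** transpose 0))
      + trace (Q ** block 0 (B2 ** h) 0 0 ** P) + trace (Q ** P ** transpose (block 0 (B2 ** h) 0 0)))
      = (\<lambda>Z. (2 *\<^sub>R (transpose B2 ** blk12 H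
                 + transpose D0 ** clC C0 D0 c ** bcol2 P)) \<bullet> Z)"
    proof
      fix h :: "real^'n^'m2"
      have e1: "trace ((transpose (hcat 0 (D0 ** h)) ** Cm + transpose Cm ** hcat 0 (D0 ** h)) ** P)
          = 2 * ((transpose D0 ** Cm ** bcol2 P) \<bullet> h)"
        using Gterm[OF Psym, of "hcat 0 (D0 ** h)" Cm]
        by (simp add: inner_hcat rcol_mm bcol2_rcol inner_mm_left matrix_mul_assoc)
      have e2: "trace (Q ** block 0 (B2 ** h) 0 0 ** P) + trace (Q ** P ** transpose (block 0 (B2 ** h) 0 0))
          = 2 * ((transpose B2 ** blk12 H) \<bullet> h)"
        using two_trace[OF Psym Qsym, of "block 0 (B2 ** h) 0 0"]
        by (simp add: inner_block inner_mm_left Hd)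
      show "trace ((transpose (hcat 0 (D0 ** h)) ** Cm + transpose Cm ** hcat 0 (D0 ** h)) ** P)
      + trace (Q ** (0 ** transpose Bm + Bm ** transpose 0))
      + trace (Q ** block 0 (B2 ** h) 0 0 ** P) + trace (Q ** P ** transpose (block 0 (B2 ** h) 0 0))
      = (2 *\<^sub>R (transpose B2 ** blk12 H
                 + transpose D0 ** clC C0 D0 c ** bcol2 P)) \<bullet> h"
        using e1 e2 unfolding Cm_def by (simp add: inner_add_left algebra_simps)
    qed
    ultimately show ?thesis by simp
  qed
  show ?thesis using A1 A2 A3 by blast
qed

end
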